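(* Let $A\in\mathbb{R}^{nm\times nm}$, let $x=\operatorname{vec}(X)\in S^{nm-1}\cap\mathcal{M}_r$ with thin SVD $X=USV^\top$ ($U^\top U=I_r$, $V^\top V=I_r$, $S$ diagonal positive), and set $\mathfrak{R}(x)=x^\top Ax$, $C=A-\mathfrak{R}(x)I_{nm}$. Let $U_\xi\in\mathbb{R}^{n\times r}$, $V_\xi\in\mathbb{R}^{m\times r}$, $S_\xi\in\mathbb{R}^{r\times r}$ and $\xi=\operatorname{vec}(U_\xi V^\top+UV_\xi^\top+US_\xi V^\top)$, and put \[ \tau_\xi=\begin{bmatrix}\operatorname{vec}(U_\xi)\\ \operatorname{vec}(V_\xi^\top)\\ \operatorname{vec}(S_\xi)\end{bmatrix}\in\mathbb{R}^{nr+mr+r^2}. \] Then the following are equivalent: (a) $U^\top U_\xi=0$, $V^\top V_\xi=0$, $\operatorname{vec}(S_\xi)^\top\operatorname{vec}(S)=0$, and \[ (I-xx^\top)\,\mathrm{P}_{T_X\mathcal{M}_r}\,C\,\mathrm{P}_{T_X\mathcal{M}_r}\,(I-xx^\top)\,\xi=-\mathrm{P}_{T_X\mathcal{M}_r}(I-xx^\top)Ax; \] (b) $B^\top\tau_\xi=0$ and \[ (I-BB^\top)\,C_{\mathrm{loc}}\,(I-BB^\top)\,\tau_\xi=-(I-BB^\top)\,g, \] where \[ B=\begin{bmatrix} I_r\otimes U&0&0\\ 0&V\otimes I_r&0\\ 0&0&\operatorname{vec}(S)\end{bmatrix},\quad C_{\mathrm{loc}}=\begin{bmatrix}C_{v,v}&C_{v,u}&C_{v,vu}\\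 C_{u,v}&C_{u,u}&C_{u,vu}\\ C_{vu,v}&C_{vu,u}&C_{vu,vu}\end{bmatrix},\quad g=\begin{bmatrix}A_{v,v}\operatorname{vec}(US)\\ A_{u,u}\operatorname{vec}(SV^\top)\\ A_{vu,vu}\operatorname{vec}(S)\end{bmatrix}. \]
   Context: $\operatorname{vec}$ is columnwise reshaping, so $\operatorname{vec}(ABC)=(C^\top\otimes A)\operatorname{vec}(B)$. $\mathcal{M}_r$ is the manifold of (vectorized) $n\times m$ matrices of rank exactly $r$, $S^{nm-1}$ the unit sphere in $\mathbb{R}^{nm}$, and $\mathrm{P}_{T_X\mathcal{M}_r}=VV^\top\otimes UU^\top+VV^\top\otimes(I_n-UU^\top)+(I_m-VV^\top)\otimes UU^\top$ is the orthogonal projection onto the tangent space of $\mathcal{M}_r$ at $X$. Define $E_v=V\otimes I_n\in\mathbb{R}^{nm\times nr}$, $E_u=I_m\otimes U\in\mathbb{R}^{nm\times mr}$, $E_{vu}=V\otimes U\in\mathbb{R}^{nm\times r^2}$, and for any $M\in\mathbb{R}^{nm\times nm}$ and $a,b\in\{v,u,vu\}$ set $M_{a,b}=E_a^\top M E_b$ (e.g. $M_{v,v}=(V^\top\otimes I_n)M(V\otimes I_n)$, $M_{v,u}=(V^\top\otimes I_n)M(I_m\otimes U)$, $M_{v,vu}=(V^\top\otimes I_n)M(V\otimes U)$, $M_{u,u}=(I_m\otimes U^\top)M(I_m\otimes U)$, $M_{vu,vu}=(V^\top\otimes U^\top)M(V\otimes U)$). Note $\|\operatorname{vec}(S)\|=\|x\|=1$,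 so $B$ has orthonormal columns. *)

theory Defs
  imports "Jordan_Normal_Form.Matrix"
begin

text \<open>Column-wise vectorization: an n x m matrix becomes an (n*m) x 1 column matrix,
  entry k = i + n*j holds X(i,j).\<close>
definition vecm :: "real mat \<Rightarrow> real mat" where
  "vecm X = mat (dim_row X * dim_col X) 1 (\<lambda>(k,_). X $$ (k mod dim_row X, k div dim_row X))"

text \<open>Kronecker product (standard convention, so vec(ABC) = (C^T kron A) vec(B)).\<close>
definition kron :: "real mat \<Rightarrow> real mat \<Rightarrow> real mat" where
  "kron A B = mat (dim_row A * dim_row B) (dim_col A * dim_col B)
     (\<lambda>(i,j). A $$ (i div dim_row B, j div dim_col B) * B $$ (i mod dim_row B, j mod dim_col B))"

definition vstack :: "real mat \<Rightarrow> real mat \<Rightarrow> real mat" where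
  "vstack a b = four_block_mat a (0\<^sub>m (dim_row a) 0) b (0\<^sub>m (dim_row b) 0)"

definition hstack :: "real mat \<Rightarrow> real mat \<Rightarrow> real mat" where
  "hstack a b = four_block_mat a b (0\<^sub>m 0 (dim_col a)) (0\<^sub>m 0 (dim_col b))"

definition block3 :: "real mat \<Rightarrow> real mat \<Rightarrow> real mat \<Rightarrow> real mat \<Rightarrow> real mat \<Rightarrow> real mat
    \<Rightarrow> real mat \<Rightarrow> real mat \<Rightarrow> real mat \<Rightarrow> real mat" where
  "block3 M11 M12 M13 M21 M22 M23 M31 M32 M33 =
     four_block_mat (four_block_mat M11 M12 M21 M22) (vstack M13 M23) (hstack M31 M32) M33"

definition stack3 :: "real mat \<Rightarrow> real mat \<Rightarrow> real mat \<Rightarrow> real mat" where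
  "stack3 a b c = vstack (vstack a b) c"

definition tangent_proj :: "nat \<Rightarrow> nat \<Rightarrow> real mat \<Rightarrow> real mat \<Rightarrow> real mat" where
  "tangent_proj n m U V =
     kron (V * transpose_mat V) (U * transpose_mat U)
   + kron (V * transpose_mat V) (1\<^sub>m n - U * transpose_mat U)
   + kron (1\<^sub>m m - V * transpose_mat V) (U * transpose_mat U)"

text \<open>Local blocks M_{a,b} = E_a^T M E_b with E_v = V kron I_n, E_u = I_m kron U, E_vu = V kron U.\<close>
definition Ev :: "nat \<Rightarrow> real mat \<Rightarrow> real mat" where "Ev n V = kron V (1\<^sub>m n)"
definition Eu :: "nat \<Rightarrow> real mat \<Rightarrow> real mat" where "Eu m U = kron (1\<^sub>m m) U"
definition Evu :: "real mat \<Rightarrow> real mat \<Rightarrow> real mat" where "Evu U V = kron V U"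

definition loc_block :: "real mat \<Rightarrow> real mat \<Rightarrow> real mat \<Rightarrow> real mat" where
  "loc_block Ea M Eb = transpose_mat Ea * M * Eb"

end

theory Submission
  imports Defs
begin

lemma sum_mod_div: fixes s q :: nat shows "(\<Sum>k<s*q. f (k mod q) (k div q)) = (\<Sum>b<s. \<Sum>a<q. (f a b :: real))"
proof (induction s)
  case 0 then show ?case by simp
next
  case (Suc s)
  have "{..<Suc s * q} = {..<s*q} \<union> {s*q..<s*q+q}" by auto
  then have "(\<Sum>k<Suc s*q. f (k mod q) (k div q)) = (\<Sum>k<s*q. f (k mod q) (k div q)) + (\<Sum>k\<in>{s*q..<s*q+q}. f (k mod q) (k div q))"
    by (simp add: sum.union_disjoint ivl_disj_int)
  also have "(\<Sum>k\<in>{s*q..<s*q+q}. f (k mod q) (k div q)) = (\<Sum>a<q. f a s)"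
  proof -
    have "(\<Sum>k\<in>{s*q..<s*q+q}. f (k mod q) (k div q)) = (\<Sum>a\<in>{0..<q}. f ((a+s*q) mod q) ((a+s*q) div q))"
      using sum.shift_bounds_nat_ivl[of "\<lambda>k. f (k mod q) (k div q)" 0 "s*q" q] by (simp add: add.commute)
    also have "\<dots> = (\<Sum>a\<in>{0..<q}. f a s)" by (intro sum.cong) auto
    finally show ?thesis by (simp add: lessThan_atLeast0)
  qed
  finally show ?case using Suc by simp
qed

lemma vecm_carrier[simp]: "vecm X \<in> carrier_mat (dim_row X * dim_col X) 1"
  by (simp add: vecm_def)
lemma vecm_dims[simp]: "dim_row (vecm X) = dim_row X * dim_col X" "dim_col (vecm X) = 1"
  by (simp_all add: vecm_def)
lemma vecm_index: "k < dim_row X * dim_col X \<Longrightarrow> vecm X $$ (k,0) = X $$ (k mod dim_row X, k div dim_row X)"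
  by (simp add: vecm_def)
lemma kron_dims[simp]: "dim_row (kron A B) = dim_row A * dim_row B" "dim_col (kron A B) = dim_col A * dim_col B"
  by (simp_all add: kron_def)
lemma kron_index: "i < dim_row A * dim_row B \<Longrightarrow> j < dim_col A * dim_col B \<Longrightarrow>
   kron A B $$ (i,j) = A $$ (i div dim_row B, j div dim_col B) * B $$ (i mod dim_row B, j mod dim_col B)"
  by (simp add: kron_def)

lemma kron_vec:
  assumes A: "A \<in> carrier_mat p q" and B: "B \<in> carrier_mat q s" and C: "C \<in> carrier_mat s t"
  shows "kron (transpose_mat C) A * vecm B = vecm (A * B * C)"
proof (rule eq_matI)
  show "dim_row (kron (transpose_mat C) A * vecm B) = dim_row (vecm (A * B * C))"
    using A B C by simp
  show "dim_col (kron (transpose_mat C) A * vecm B) = dim_col (vecm (A * B * C))" by simp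
  fix i j assume i: "i < dim_row (vecm (A * B * C))" and j: "j < dim_col (vecm (A * B * C))"
  then have j0: "j = 0" by simp
  from i A B C have it: "i < t * p" by (simp add: mult.commute)
  then have pp: "p > 0" by (cases p) auto
  have idp: "i div p < t" using it by (simp add: less_mult_imp_div_less)
  have imp: "i mod p < p" using pp by simp
  have "(kron (transpose_mat C) A * vecm B) $$ (i, j) = (\<Sum>k<s*q. (transpose_mat C $$ (i div p, k div q) * A $$ (i mod p, k mod q)) * B $$ (k mod q, k div q))"
    unfolding j0 using A B C it
    apply (subst index_mult_mat) apply simp apply simp
    apply (simp add: scalar_prod_def lessThan_atLeast0)
    apply (intro sum.cong) apply (simp add: mult.commute)
    apply (subst index_row) apply simp apply (simp add: mult.commute)
    apply (subst kron_index) apply simp apply (simp add: mult.commute)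
    apply (subst vecm_index) apply (simp add: mult.commute)
    by (simp add: less_mult_imp_div_less mult.commute)
  also have "\<dots> = (\<Sum>b<s. \<Sum>a<q. (transpose_mat C $$ (i div p, b) * A $$ (i mod p, a)) * B $$ (a, b))"
    by (rule sum_mod_div[where f = "\<lambda>a b. (transpose_mat C $$ (i div p, b) * A $$ (i mod p, a)) * B $$ (a, b)"])
  also have "\<dots> = vecm (A * B * C) $$ (i, j)"
    unfolding j0 using A B C it idp imp
    apply (subst vecm_index) apply (simp add: mult.commute)
    apply (simp add: scalar_prod_def lessThan_atLeast0 sum_distrib_right)
    apply (subst sum.swap)
    apply (intro sum.cong refl)
    by (simp add: sum_distrib_left mult_ac)
  finally show "(kron (transpose_mat C) A * vecm B) $$ (i, j) = vecm (A * B * C) $$ (i, j)" .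
qed


lemma idx_mod: "(i::nat) < a*b \<Longrightarrow> i mod a < a"
  by (cases a) auto
lemma idx_div: "(i::nat) < a*b \<Longrightarrow> i div a < b"
  by (simp add: less_mult_imp_div_less mult.commute)
lemma idx_mod': "(i::nat) < b*a \<Longrightarrow> i mod a < a"
  by (cases a) auto
lemma idx_div': "(i::nat) < b*a \<Longrightarrow> i div a < b"
  by (simp add: less_mult_imp_div_less)

lemma transpose_kron: "transpose_mat (kron A B) = kron (transpose_mat A) (transpose_mat B)"
proof (rule eq_matI)
  fix i j assume i: "i < dim_row (kron (transpose_mat A) (transpose_mat B))"
    and j: "j < dim_col (kron (transpose_mat A) (transpose_mat B))"
  have "dim_col B > 0" using i by (cases "dim_col B") auto
  have "dim_row B > 0" using j by (cases "dim_row B") auto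
  show "transpose_mat (kron A B) $$ (i, j) = kron (transpose_mat A) (transpose_mat B) $$ (i, j)"
    using i j \<open>dim_col B > 0\<close> \<open>dim_row B > 0\<close> by (simp add: kron_def less_mult_imp_div_less)
qed auto

lemma kron_vec_left:
  assumes A: "A \<in> carrier_mat p q" and B: "B \<in> carrier_mat q s"
  shows "kron (1\<^sub>m s) A * vecm B = vecm (A * B)"
  using kron_vec[OF A B one_carrier_mat[of s]] A B by simp

lemma kron_vec_right:
  assumes B: "B \<in> carrier_mat q s" and C: "C \<in> carrier_mat s t"
  shows "kron (transpose_mat C) (1\<^sub>m q) * vecm B = vecm (B * C)"
  using kron_vec[OF one_carrier_mat[of q] B C] B C by simp

lemma vecm_add: "X \<in> carrier_mat a b \<Longrightarrow> Y \<in> carrier_mat a b \<Longrightarrow> vecm (X + Y) = vecm X + vecm Y"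
  by (rule eq_matI) (auto simp: vecm_def idx_mod idx_div)
lemma vecm_minus: "X \<in> carrier_mat a b \<Longrightarrow> Y \<in> carrier_mat a b \<Longrightarrow> vecm (X - Y) = vecm X - vecm Y"
  by (rule eq_matI) (auto simp: vecm_def idx_mod idx_div)
lemma vecm_smult: "vecm (k \<cdot>\<^sub>m X) = k \<cdot>\<^sub>m vecm X"
  by (rule eq_matI) (auto simp: vecm_def idx_mod idx_div)
lemma vecm_zero: "vecm (0\<^sub>m a b) = 0\<^sub>m (a*b) 1"
  by (rule eq_matI) (auto simp: vecm_def idx_mod idx_div)

lemma vecm_inj: assumes "X \<in> carrier_mat a b" "Y \<in> carrier_mat a b" "vecm X = vecm Y"
  shows "X = Y"
proof (rule eq_matI)
  fix i j assume i: "i < dim_row Y" and j: "j < dim_col Y"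
  have ia: "i < a" and jb: "j < b" using i j assms(2) by auto
  have "i + a*j < a*(j+1)" using ia by simp
  also have "a*(j+1) \<le> a*b" using jb by (intro mult_le_mono2) simp
  finally have k: "i + a*j < a*b" .
  have "vecm X $$ (i + a*j, 0) = vecm Y $$ (i + a*j, 0)" using assms(3) by simp
  moreover have "a > 0" using ia by simp
  moreover have "(i + a*j) mod a = i" using ia by simp
  moreover have "(i + a*j) div a = j" using ia by simp
  ultimately show "X $$ (i, j) = Y $$ (i, j)" using assms(1,2) ia jb k by (simp add: vecm_index carrier_matD)
qed (use assms in auto)

lemma vecm_eq_iff: "X \<in> carrier_mat a b \<Longrightarrow> Y \<in> carrier_mat a b \<Longrightarrow> vecm X = vecm Y \<longleftrightarrow> X = Y"
  using vecm_inj by blast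

lemma vecm_surj: assumes w: "w \<in> carrier_mat (a*b) 1"
  shows "\<exists>W \<in> carrier_mat a b. vecm W = w"
proof (intro bexI)
  let ?W = "mat a b (\<lambda>(i,j). w $$ (i + a*j, 0))"
  show "?W \<in> carrier_mat a b" by simp
  show "vecm ?W = w"
  proof (rule eq_matI)
    fix i j assume i: "i < dim_row w" and j: "j < dim_col w"
    have "a > 0" using i w by (cases a) auto
    then show "vecm ?W $$ (i, j) = w $$ (i, j)" using i j w
      by (simp add: vecm_def less_mult_imp_div_less mult.commute)
  qed (use w in auto)
qed

lemma mult_one_by_one: fixes M :: "real mat" assumes M: "M \<in> carrier_mat k 1" and s: "\<sigma> \<in> carrier_mat 1 1"
  shows "M * \<sigma> = (\<sigma> $$ (0,0)) \<cdot>\<^sub>m M"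
  by (rule eq_matI) (use M s in \<open>auto simp: scalar_prod_def mult.commute\<close>)



lemma zero_col_mat: "Y \<in> carrier_mat k 0 \<Longrightarrow> Y = 0\<^sub>m k 0"
  by (rule eq_matI) auto
lemma zero_row_mat: "Y \<in> carrier_mat 0 k \<Longrightarrow> Y = 0\<^sub>m 0 k"
  by (rule eq_matI) auto

lemma vstack_carrier[simp]: "a \<in> carrier_mat p c \<Longrightarrow> b \<in> carrier_mat q c \<Longrightarrow> vstack a b \<in> carrier_mat (p+q) c"
  unfolding vstack_def carrier_mat_def by simp
lemma hstack_carrier[simp]: "a \<in> carrier_mat k p \<Longrightarrow> b \<in> carrier_mat k q \<Longrightarrow> hstack a b \<in> carrier_mat k (p+q)"
  unfolding hstack_def carrier_mat_def by simp

lemma vstack_eq_iff: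
  assumes "a \<in> carrier_mat p c" "b \<in> carrier_mat q c" "a' \<in> carrier_mat p c" "b' \<in> carrier_mat q c"
  shows "vstack a b = vstack a' b' \<longleftrightarrow> a = a' \<and> b = b'"
proof
  assume eq: "vstack a b = vstack a' b'"
  show "a = a' \<and> b = b'"
  proof
    show "a = a'"
    proof (rule eq_matI)
      fix i j assume "i < dim_row a'" "j < dim_col a'"
      then show "a $$ (i, j) = a' $$ (i, j)"
        using arg_cong[OF eq, of "\<lambda>M. M $$ (i,j)"] assms by (simp add: vstack_def)
    qed (use assms in auto)
    show "b = b'"
    proof (rule eq_matI)
      fix i j assume "i < dim_row b'" "j < dim_col b'"
      then show "b $$ (i, j) = b' $$ (i, j)"
        using arg_cong[OF eq, of "\<lambda>M. M $$ (p+i,j)"] assms by (simp add: vstack_def)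
    qed (use assms in auto)
  qed
qed auto

lemma vstack_add:
  assumes "a \<in> carrier_mat p c" "b \<in> carrier_mat q c" "a' \<in> carrier_mat p c" "b' \<in> carrier_mat q c"
  shows "vstack a b + vstack a' b' = vstack (a + a') (b + b')"
  by (rule eq_matI) (use assms in \<open>auto simp: vstack_def\<close>)
lemma vstack_minus:
  assumes "a \<in> carrier_mat p c" "b \<in> carrier_mat q c" "a' \<in> carrier_mat p c" "b' \<in> carrier_mat q c"
  shows "vstack a b - vstack a' b' = vstack (a - a') (b - b')"
  by (rule eq_matI) (use assms in \<open>auto simp: vstack_def\<close>)
lemma vstack_uminus:
  assumes "a \<in> carrier_mat p c" "b \<in> carrier_mat q c"
  shows "- vstack a b = vstack (- a) (- b)"
  by (rule eq_matI) (use assms in \<open>auto simp: vstack_def\<close>)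
lemma vstack_zero: "vstack (0\<^sub>m p c) (0\<^sub>m q c) = 0\<^sub>m (p+q) c"
  by (rule eq_matI) (auto simp: vstack_def)

lemma vstack_mult:
  assumes A: "A \<in> carrier_mat p k" and B: "B \<in> carrier_mat q k" and c: "c \<in> carrier_mat k d"
  shows "vstack A B * c = vstack (A * c) (B * c)"
proof -
  have c': "c = four_block_mat c (0\<^sub>m k 0) (0\<^sub>m 0 d) (0\<^sub>m 0 0)"
    by (rule eq_matI) (use c in auto)
  have "vstack A B * c = four_block_mat A (0\<^sub>m p 0) B (0\<^sub>m q 0) * four_block_mat c (0\<^sub>m k 0) (0\<^sub>m 0 d) (0\<^sub>m 0 0)"
    using A B by (subst c'[symmetric]) (simp add: vstack_def)
  also have "\<dots> = four_block_mat (A * c + 0\<^sub>m p 0 * 0\<^sub>m 0 d) (A * 0\<^sub>m k 0 + 0\<^sub>m p 0 * 0\<^sub>m 0 0)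
      (B * c + 0\<^sub>m q 0 * 0\<^sub>m 0 d) (B * 0\<^sub>m k 0 + 0\<^sub>m q 0 * 0\<^sub>m 0 0)"
    by (rule mult_four_block_mat) (use A B c in auto)
  also have "\<dots> = vstack (A * c) (B * c)"
    unfolding vstack_def using A B c by (intro cong_four_block_mat) (auto intro!: zero_col_mat)
  finally show ?thesis .
qed

lemma fb_mult_vstack:
  assumes M: "M11 \<in> carrier_mat k1 p" "M12 \<in> carrier_mat k1 q" "M21 \<in> carrier_mat k2 p" "M22 \<in> carrier_mat k2 q"
    and a: "a \<in> carrier_mat p d" and b: "b \<in> carrier_mat q d"
  shows "four_block_mat M11 M12 M21 M22 * vstack a b = vstack (M11 * a + M12 * b) (M21 * a + M22 * b)"
proof -
  have "four_block_mat M11 M12 M21 M22 * vstack a b = four_block_mat (M11 * a + M12 * b) (M11 * 0\<^sub>m p 0 + M12 * 0\<^sub>m q 0)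
      (M21 * a + M22 * b) (M21 * 0\<^sub>m p 0 + M22 * 0\<^sub>m q 0)"
    unfolding vstack_def carrier_matD(1)[OF a] carrier_matD(1)[OF b]
    by (rule mult_four_block_mat) (use M a b in auto)
  also have "\<dots> = vstack (M11 * a + M12 * b) (M21 * a + M22 * b)"
    unfolding vstack_def using M a b by (intro cong_four_block_mat) (auto intro!: zero_col_mat)
  finally show ?thesis .
qed

lemma hstack_mult_vstack:
  assumes M: "M1 \<in> carrier_mat k p" "M2 \<in> carrier_mat k q"
    and a: "a \<in> carrier_mat p d" and b: "b \<in> carrier_mat q d"
  shows "hstack M1 M2 * vstack a b = M1 * a + M2 * b"
proof -
  have "hstack M1 M2 * vstack a b = four_block_mat (M1 * a + M2 * b) (M1 * 0\<^sub>m p 0 + M2 * 0\<^sub>m q 0)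
      (0\<^sub>m 0 p * a + 0\<^sub>m 0 q * b) (0\<^sub>m 0 p * 0\<^sub>m p 0 + 0\<^sub>m 0 q * 0\<^sub>m q 0)"
    unfolding vstack_def hstack_def carrier_matD(1)[OF a] carrier_matD(1)[OF b]
       carrier_matD(2)[OF M(1)] carrier_matD(2)[OF M(2)]
    by (rule mult_four_block_mat) (use M a b in auto)
  also have "\<dots> = M1 * a + M2 * b"
    by (rule eq_matI) (use M a b in auto)
  finally show ?thesis .
qed

lemma transpose_vstack: "a \<in> carrier_mat p c \<Longrightarrow> b \<in> carrier_mat q c \<Longrightarrow>
    transpose_mat (vstack a b) = hstack (transpose_mat a) (transpose_mat b)"
  by (rule eq_matI) (auto simp: vstack_def hstack_def)
lemma transpose_hstack: "a \<in> carrier_mat k p \<Longrightarrow> b \<in> carrier_mat k q \<Longrightarrow>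
    transpose_mat (hstack a b) = vstack (transpose_mat a) (transpose_mat b)"
  by (rule eq_matI) (auto simp: vstack_def hstack_def)

lemma block3_carrier:
  assumes "M11 \<in> carrier_mat k1 p" "M12 \<in> carrier_mat k1 q" "M13 \<in> carrier_mat k1 t"
    "M21 \<in> carrier_mat k2 p" "M22 \<in> carrier_mat k2 q" "M23 \<in> carrier_mat k2 t"
    "M31 \<in> carrier_mat k3 p" "M32 \<in> carrier_mat k3 q" "M33 \<in> carrier_mat k3 t"
  shows "block3 M11 M12 M13 M21 M22 M23 M31 M32 M33 \<in> carrier_mat (k1+k2+k3) (p+q+t)"
  unfolding block3_def using assms by (intro four_block_carrier_mat) auto

lemma stack3_carrier[simp]: "a \<in> carrier_mat p d \<Longrightarrow> b \<in> carrier_mat q d \<Longrightarrow> c \<in> carrier_mat t d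
  \<Longrightarrow> stack3 a b c \<in> carrier_mat (p+q+t) d"
  unfolding stack3_def by simp

lemma block3_mult_stack3:
  assumes M: "M11 \<in> carrier_mat k1 p" "M12 \<in> carrier_mat k1 q" "M13 \<in> carrier_mat k1 t"
    "M21 \<in> carrier_mat k2 p" "M22 \<in> carrier_mat k2 q" "M23 \<in> carrier_mat k2 t"
    "M31 \<in> carrier_mat k3 p" "M32 \<in> carrier_mat k3 q" "M33 \<in> carrier_mat k3 t"
    and v: "a \<in> carrier_mat p d" "b \<in> carrier_mat q d" "c \<in> carrier_mat t d"
  shows "block3 M11 M12 M13 M21 M22 M23 M31 M32 M33 * stack3 a b c =
    stack3 (M11 * a + M12 * b + M13 * c) (M21 * a + M22 * b + M23 * c) (M31 * a + M32 * b + M33 * c)"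
proof -
  have "block3 M11 M12 M13 M21 M22 M23 M31 M32 M33 * stack3 a b c =
    vstack (four_block_mat M11 M12 M21 M22 * vstack a b + vstack M13 M23 * c)
           (hstack M31 M32 * vstack a b + M33 * c)"
    unfolding block3_def stack3_def using M v
    by (intro fb_mult_vstack) (auto intro!: four_block_carrier_mat)
  also have "\<dots> = stack3 (M11 * a + M12 * b + M13 * c) (M21 * a + M22 * b + M23 * c) (M31 * a + M32 * b + M33 * c)"
    unfolding stack3_def fb_mult_vstack[OF M(1,2,4,5) v(1,2)] vstack_mult[OF M(3,6) v(3)]
      hstack_mult_vstack[OF M(7,8) v(1,2)]
    using M v by (subst vstack_add[of _ k1 d _ k2]) auto
  finally show ?thesis .
qed

lemma transpose_block3:
  assumes "M11 \<in> carrier_mat k1 p" "M12 \<in> carrier_mat k1 q" "M13 \<in> carrier_mat k1 t"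
    "M21 \<in> carrier_mat k2 p" "M22 \<in> carrier_mat k2 q" "M23 \<in> carrier_mat k2 t"
    "M31 \<in> carrier_mat k3 p" "M32 \<in> carrier_mat k3 q" "M33 \<in> carrier_mat k3 t"
  shows "transpose_mat (block3 M11 M12 M13 M21 M22 M23 M31 M32 M33) =
    block3 (transpose_mat M11) (transpose_mat M21) (transpose_mat M31)
           (transpose_mat M12) (transpose_mat M22) (transpose_mat M32)
           (transpose_mat M13) (transpose_mat M23) (transpose_mat M33)"
  by (rule eq_matI) (use assms in \<open>auto simp: block3_def vstack_def hstack_def\<close>)

lemma stack3_eq_iff:
  assumes "a \<in> carrier_mat p d" "b \<in> carrier_mat q d" "c \<in> carrier_mat t d"
    "a' \<in> carrier_mat p d" "b' \<in> carrier_mat q d" "c' \<in> carrier_mat t d"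
  shows "stack3 a b c = stack3 a' b' c' \<longleftrightarrow> a = a' \<and> b = b' \<and> c = c'"
  unfolding stack3_def using assms
  by (subst vstack_eq_iff[of _ "p+q" d _ t]) (auto simp: vstack_eq_iff)

lemma stack3_add:
  assumes "a \<in> carrier_mat p d" "b \<in> carrier_mat q d" "c \<in> carrier_mat t d"
    "a' \<in> carrier_mat p d" "b' \<in> carrier_mat q d" "c' \<in> carrier_mat t d"
  shows "stack3 a b c + stack3 a' b' c' = stack3 (a + a') (b + b') (c + c')"
  unfolding stack3_def using assms
  by (subst vstack_add[of _ "p+q" d _ t]) (auto simp: vstack_add)
lemma stack3_minus:
  assumes "a \<in> carrier_mat p d" "b \<in> carrier_mat q d" "c \<in> carrier_mat t d"
    "a' \<in> carrier_mat p d" "b' \<in> carrier_mat q d" "c' \<in> carrier_mat t d"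
  shows "stack3 a b c - stack3 a' b' c' = stack3 (a - a') (b - b') (c - c')"
  unfolding stack3_def using assms
  by (subst vstack_minus[of _ "p+q" d _ t]) (auto simp: vstack_minus)
lemma stack3_zero: "stack3 (0\<^sub>m p d) (0\<^sub>m q d) (0\<^sub>m t d) = 0\<^sub>m (p+q+t) d"
  unfolding stack3_def by (simp add: vstack_zero)



lemma mat_minus_eq_0: "X \<in> carrier_mat a b \<Longrightarrow> Y \<in> carrier_mat a b \<Longrightarrow> (X - Y = 0\<^sub>m a b) = (X = (Y::real mat))"
proof
  assume "X \<in> carrier_mat a b" "Y \<in> carrier_mat a b" "X - Y = 0\<^sub>m a b"
  then show "X = Y"
    by (intro eq_matI) (metis (no_types, lifting) carrier_matD index_minus_mat(1) index_zero_mat(1) right_minus_eq)+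
qed auto

lemma mat_eq_uminus_iff: fixes X Y :: "real mat" assumes "X \<in> carrier_mat a b" "Y \<in> carrier_mat a b"
  shows "(X = - Y) = (X + Y = 0\<^sub>m a (b::nat))"
proof
  assume "X = - Y" then show "X + Y = 0\<^sub>m a b" using assms by (intro eq_matI) auto
next
  assume h: "X + Y = 0\<^sub>m a b"
  show "X = - Y"
  proof (rule eq_matI)
    fix i j assume "i < dim_row (- Y)" "j < dim_col (- Y)"
    then show "X $$ (i, j) = (- Y) $$ (i, j)"
      using arg_cong[OF h, of "\<lambda>M. M $$ (i,j)"] assms by auto
  qed (use assms in auto)
qed



lemma BT_mult:
  assumes U: "U \<in> carrier_mat n r" and V: "V \<in> carrier_mat m r" and S: "S \<in> carrier_mat r r"
    and G: "G1 \<in> carrier_mat n r" "G2 \<in> carrier_mat r m" "G3 \<in> carrier_mat r r"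
    and B: "B = block3 (kron (1\<^sub>m r) U) (0\<^sub>m (n*r) (r*r)) (0\<^sub>m (n*r) 1)
                    (0\<^sub>m (m*r) (r*r)) (kron V (1\<^sub>m r)) (0\<^sub>m (m*r) 1)
                    (0\<^sub>m (r*r) (r*r)) (0\<^sub>m (r*r) (r*r)) (vecm S)"
  shows "transpose_mat B * stack3 (vecm G1) (vecm G2) (vecm G3) =
     stack3 (vecm (transpose_mat U * G1)) (vecm (G2 * V)) (transpose_mat (vecm S) * vecm G3)"
proof -
  have c1: "kron (1\<^sub>m r) U \<in> carrier_mat (n*r) (r*r)" using U unfolding carrier_mat_def by (simp add: mult.commute)
  have c2: "kron V (1\<^sub>m r) \<in> carrier_mat (m*r) (r*r)" using V unfolding carrier_mat_def by (simp add: mult.commute)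
  have c3: "vecm S \<in> carrier_mat (r*r) 1" using S unfolding carrier_mat_def by (simp add: mult.commute)
  have g1: "vecm G1 \<in> carrier_mat (n*r) 1" and g2: "vecm G2 \<in> carrier_mat (m*r) 1"
    and g3: "vecm G3 \<in> carrier_mat (r*r) 1" using G unfolding carrier_mat_def by (simp_all add: mult.commute)
  have tB: "transpose_mat B = block3 (transpose_mat (kron (1\<^sub>m r) U)) (0\<^sub>m (r*r) (m*r)) (0\<^sub>m (r*r) (r*r))
      (0\<^sub>m (r*r) (n*r)) (transpose_mat (kron V (1\<^sub>m r))) (0\<^sub>m (r*r) (r*r))
      (0\<^sub>m 1 (n*r)) (0\<^sub>m 1 (m*r)) (transpose_mat (vecm S))"
    unfolding B by (subst transpose_block3[OF c1 _ _ _ c2 _ _ _ c3]) auto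
  have t1: "transpose_mat (kron (1\<^sub>m r) U) \<in> carrier_mat (r*r) (n*r)" using c1 by simp
  have t2: "transpose_mat (kron V (1\<^sub>m r)) \<in> carrier_mat (r*r) (m*r)" using c2 by simp
  have t3: "transpose_mat (vecm S) \<in> carrier_mat 1 (r*r)" using c3 by simp
  have "transpose_mat B * stack3 (vecm G1) (vecm G2) (vecm G3) =
     stack3 (transpose_mat (kron (1\<^sub>m r) U) * vecm G1 + 0\<^sub>m (r*r) (m*r) * vecm G2 + 0\<^sub>m (r*r) (r*r) * vecm G3)
      (0\<^sub>m (r*r) (n*r) * vecm G1 + transpose_mat (kron V (1\<^sub>m r)) * vecm G2 + 0\<^sub>m (r*r) (r*r) * vecm G3)
      (0\<^sub>m 1 (n*r) * vecm G1 + 0\<^sub>m 1 (m*r) * vecm G2 + transpose_mat (vecm S) * vecm G3)"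
    unfolding tB by (rule block3_mult_stack3[OF t1 _ _ _ t2 _ _ _ t3 g1 g2 g3]) auto
  also have "\<dots> = stack3 (transpose_mat (kron (1\<^sub>m r) U) * vecm G1) (transpose_mat (kron V (1\<^sub>m r)) * vecm G2)
      (transpose_mat (vecm S) * vecm G3)"
    using t1 t2 t3 g1 g2 g3 by (simp add: left_mult_zero_mat[OF g1] left_mult_zero_mat[OF g2] left_mult_zero_mat[OF g3])
  moreover have "transpose_mat (kron (1\<^sub>m r) U) * vecm G1 = vecm (transpose_mat U * G1)"
    unfolding transpose_kron transpose_one using U G by (intro kron_vec_left) auto
  moreover have "transpose_mat (kron V (1\<^sub>m r)) * vecm G2 = vecm (G2 * V)"
    unfolding transpose_kron transpose_one using V G by (intro kron_vec_right) auto
  ultimately show ?thesis by simp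
qed

lemma B_mult:
  assumes U: "U \<in> carrier_mat n r" and V: "V \<in> carrier_mat m r" and S: "S \<in> carrier_mat r r"
    and H: "H1 \<in> carrier_mat r r" "H2 \<in> carrier_mat r r" "\<sigma> \<in> carrier_mat 1 1"
    and B: "B = block3 (kron (1\<^sub>m r) U) (0\<^sub>m (n*r) (r*r)) (0\<^sub>m (n*r) 1)
                    (0\<^sub>m (m*r) (r*r)) (kron V (1\<^sub>m r)) (0\<^sub>m (m*r) 1)
                    (0\<^sub>m (r*r) (r*r)) (0\<^sub>m (r*r) (r*r)) (vecm S)"
  shows "B * stack3 (vecm H1) (vecm H2) \<sigma> =
     stack3 (vecm (U * H1)) (vecm (H2 * transpose_mat V)) (vecm S * \<sigma>)"
proof -
  have c1: "kron (1\<^sub>m r) U \<in> carrier_mat (n*r) (r*r)" using U unfolding carrier_mat_def by (simp add: mult.commute)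
  have c2: "kron V (1\<^sub>m r) \<in> carrier_mat (m*r) (r*r)" using V unfolding carrier_mat_def by (simp add: mult.commute)
  have c3: "vecm S \<in> carrier_mat (r*r) 1" using S unfolding carrier_mat_def by (simp add: mult.commute)
  have h1: "vecm H1 \<in> carrier_mat (r*r) 1" and h2: "vecm H2 \<in> carrier_mat (r*r) 1"
    using H unfolding carrier_mat_def by (simp_all add: mult.commute)
  have "B * stack3 (vecm H1) (vecm H2) \<sigma> =
     stack3 (kron (1\<^sub>m r) U * vecm H1 + 0\<^sub>m (n*r) (r*r) * vecm H2 + 0\<^sub>m (n*r) 1 * \<sigma>)
      (0\<^sub>m (m*r) (r*r) * vecm H1 + kron V (1\<^sub>m r) * vecm H2 + 0\<^sub>m (m*r) 1 * \<sigma>)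
      (0\<^sub>m (r*r) (r*r) * vecm H1 + 0\<^sub>m (r*r) (r*r) * vecm H2 + vecm S * \<sigma>)"
    unfolding B by (rule block3_mult_stack3[OF c1 _ _ _ c2 _ _ _ c3 h1 h2 H(3)]) auto
  also have "\<dots> = stack3 (kron (1\<^sub>m r) U * vecm H1) (kron V (1\<^sub>m r) * vecm H2) (vecm S * \<sigma>)"
    using c1 c2 c3 h1 h2 H by (simp add: left_mult_zero_mat[OF h1] left_mult_zero_mat[OF h2] left_mult_zero_mat[OF H(3)])
  moreover have "kron (1\<^sub>m r) U * vecm H1 = vecm (U * H1)"
    using U H by (intro kron_vec_left) auto
  moreover have "kron V (1\<^sub>m r) * vecm H2 = vecm (H2 * transpose_mat V)"
    using kron_vec_right[of H2 r r "transpose_mat V" m] V H by simp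
  ultimately show ?thesis by simp
qed



lemma assoc_d: "dim_col A = dim_row B \<Longrightarrow> dim_col B = dim_row C \<Longrightarrow> (A::real mat) * B * C = A * (B * C)"
  by (rule assoc_mult_mat[of A "dim_row A" "dim_col A" B "dim_col B" C "dim_col C"]) (auto intro!: carrier_matI)

lemma distl_add_d: "dim_col A = dim_row B \<Longrightarrow> dim_row B = dim_row C \<Longrightarrow> dim_col B = dim_col C \<Longrightarrow>
   (A::real mat) * (B + C) = A * B + A * C"
  by (rule mult_add_distrib_mat[of A "dim_row A" "dim_col A" B "dim_col B"]) (auto intro!: carrier_matI)
lemma distr_add_d: "dim_row A = dim_row B \<Longrightarrow> dim_col A = dim_col B \<Longrightarrow> dim_col B = dim_row C \<Longrightarrow>
   ((A::real mat) + B) * C = A * C + B * C"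
  by (rule add_mult_distrib_mat[of A "dim_row A" "dim_col A" B C "dim_col C"]) (auto intro!: carrier_matI)
lemma distl_minus_d: "dim_col A = dim_row B \<Longrightarrow> dim_row B = dim_row C \<Longrightarrow> dim_col B = dim_col C \<Longrightarrow>
   (A::real mat) * (B - C) = A * B - A * C"
  by (rule mult_minus_distrib_mat[of A "dim_row A" "dim_col A" B "dim_col B"]) (auto intro!: carrier_matI)
lemma distr_minus_d: "dim_row A = dim_row B \<Longrightarrow> dim_col A = dim_col B \<Longrightarrow> dim_col B = dim_row C \<Longrightarrow>
   ((A::real mat) - B) * C = A * C - B * C"
  by (rule minus_mult_distrib_mat[of A "dim_row A" "dim_col A" B C "dim_col C"]) (auto intro!: carrier_matI)
lemma smult_r_d: "dim_col A = dim_row B \<Longrightarrow> (A::real mat) * (k \<cdot>\<^sub>m B) = k \<cdot>\<^sub>m (A * B)"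
  by (rule mult_smult_distrib[of A "dim_row A" "dim_col A" B "dim_col B"]) (auto intro!: carrier_matI)
lemma smult_l_d: "dim_col A = dim_row B \<Longrightarrow> (k \<cdot>\<^sub>m (A::real mat)) * B = k \<cdot>\<^sub>m (A * B)"
  by (rule mult_smult_assoc_mat[of A "dim_row A" "dim_col A" B "dim_col B"]) (auto intro!: carrier_matI)

lemma mat_diff_self[simp]: "(X::real mat) - X = 0\<^sub>m (dim_row X) (dim_col X)"
  by (rule eq_matI) auto

locale orthm =
  fixes Q :: "real mat" and k r :: nat
  assumes Qc: "Q \<in> carrier_mat k r" and QQ: "transpose_mat Q * Q = 1\<^sub>m r"
begin
lemma dims[simp]: "dim_row Q = k" "dim_col Q = r" using Qc by auto
lemma QtQ_r[simp]: "dim_row Z = r \<Longrightarrow> transpose_mat Q * (Q * Z) = Z"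
  by (subst assoc_d[symmetric]) (auto simp: QQ simp del: assoc_mult_mat)
lemma QtD[simp]: "transpose_mat Q * (1\<^sub>m k - Q * transpose_mat Q) = 0\<^sub>m r k"
  by (subst distl_minus_d) auto
lemma QtD_r[simp]: "dim_row Z = k \<Longrightarrow> transpose_mat Q * ((1\<^sub>m k - Q * transpose_mat Q) * Z) = 0\<^sub>m r (dim_col Z)"
  by (subst assoc_d[symmetric]) (auto simp del: assoc_mult_mat)
lemma DQ[simp]: "(1\<^sub>m k - Q * transpose_mat Q) * Q = 0\<^sub>m k r"
  by (subst distr_minus_d) (auto simp: assoc_d QQ)
lemma DQ_r[simp]: "dim_row Z = r \<Longrightarrow> (1\<^sub>m k - Q * transpose_mat Q) * (Q * Z) = 0\<^sub>m k (dim_col Z)"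
  by (subst assoc_d[symmetric]) (auto simp del: assoc_mult_mat)
lemma QtQ[simp]: "transpose_mat Q * Q = 1\<^sub>m r" by (rule QQ)
lemma D_sym: "transpose_mat (1\<^sub>m k - Q * transpose_mat Q) = 1\<^sub>m k - Q * transpose_mat Q"
  by (rule eq_matI) (auto simp: scalar_prod_def mult.commute)
lemma P_sym: "transpose_mat (Q * transpose_mat Q) = Q * transpose_mat Q"
  by (rule eq_matI) (auto simp: scalar_prod_def mult.commute)
end



lemma add_zero_d[simp]: "dim_row X = a \<Longrightarrow> dim_col X = b \<Longrightarrow> (X::real mat) + 0\<^sub>m a b = X"
  "dim_row X = a \<Longrightarrow> dim_col X = b \<Longrightarrow> 0\<^sub>m a b + X = X"
  "dim_row X = a \<Longrightarrow> dim_col X = b \<Longrightarrow> X - 0\<^sub>m a b = X"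
  by (auto intro!: eq_matI)
lemma add_diff_cancel_d[simp]: "dim_row A = dim_row B \<Longrightarrow> dim_col A = dim_col B \<Longrightarrow> (A::real mat) + (B - A) = B"
  "dim_row A = dim_row B \<Longrightarrow> dim_col A = dim_col B \<Longrightarrow> (B - A) + A = B"
  by (auto intro!: eq_matI)

lemma lin4:
  assumes d: "dim_row a = p" "dim_col a = q" "dim_row b = p" "dim_col b = q"
    "dim_row c = p" "dim_col c = q" "dim_row d = p" "dim_col d = q"
    and h: "a - c - (b - d) = 0\<^sub>m p q"
  shows "b + (c - d) = (a::real mat)"
proof (rule eq_matI)
  fix i j assume "i < dim_row a" "j < dim_col a"
  then show "(b + (c - d)) $$ (i, j) = a $$ (i, j)"
    using arg_cong[OF h, of "\<lambda>M. M $$ (i,j)"] d by simp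
qed (use d in auto)

definition tpm :: "nat \<Rightarrow> nat \<Rightarrow> real mat \<Rightarrow> real mat \<Rightarrow> real mat \<Rightarrow> real mat" where
 "tpm n m U V W = (U * transpose_mat U) * W * (V * transpose_mat V)
    + (1\<^sub>m n - U * transpose_mat U) * W * (V * transpose_mat V)
    + (U * transpose_mat U) * W * (1\<^sub>m m - V * transpose_mat V)"

lemma tpm_carrier: "U \<in> carrier_mat n r \<Longrightarrow> V \<in> carrier_mat m r \<Longrightarrow> W \<in> carrier_mat n m \<Longrightarrow> tpm n m U V W \<in> carrier_mat n m"
  unfolding tpm_def by auto

lemma P_vec:
  assumes U: "U \<in> carrier_mat n r" and V: "V \<in> carrier_mat m r" and W: "W \<in> carrier_mat n m"
  shows "tangent_proj n m U V * vecm W = vecm (tpm n m U V W)"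
proof -
  have PU: "transpose_mat (U * transpose_mat U) = U * transpose_mat U"
    by (rule eq_matI) (use U in \<open>auto simp: scalar_prod_def mult.commute\<close>)
  have PV: "transpose_mat (V * transpose_mat V) = V * transpose_mat V"
    by (rule eq_matI) (use V in \<open>auto simp: scalar_prod_def mult.commute\<close>)
  have DV: "transpose_mat (1\<^sub>m m - V * transpose_mat V) = 1\<^sub>m m - V * transpose_mat V"
    by (rule eq_matI) (use V in \<open>auto simp: scalar_prod_def mult.commute\<close>)
  have k1: "kron (V * transpose_mat V) (U * transpose_mat U) * vecm W = vecm (U * transpose_mat U * W * (V * transpose_mat V))"
    using kron_vec[of "U * transpose_mat U" n n W m "V * transpose_mat V" m] U V W PV by simp
  have k2: "kron (V * transpose_mat V) (1\<^sub>m n - U * transpose_mat U) * vecm W = vecm ((1\<^sub>m n - U * transpose_mat U) * W * (V * transpose_mat V))"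
    using kron_vec[of "1\<^sub>m n - U * transpose_mat U" n n W m "V * transpose_mat V" m] U V W PV by (simp add: minus_carrier_mat)
  have k3: "kron (1\<^sub>m m - V * transpose_mat V) (U * transpose_mat U) * vecm W = vecm (U * transpose_mat U * W * (1\<^sub>m m - V * transpose_mat V))"
    using kron_vec[of "U * transpose_mat U" n n W m "1\<^sub>m m - V * transpose_mat V" m] U V W DV by (simp add: minus_carrier_mat)
  have [simp]: "dim_row W = n" "dim_col W = m" "dim_row U = n" "dim_col U = r" "dim_row V = m" "dim_col V = r"
    using U V W by auto
  have c1: "U * transpose_mat U * W * (V * transpose_mat V) \<in> carrier_mat n m" by (auto intro!: carrier_matI)
  have c2: "(1\<^sub>m n - U * transpose_mat U) * W * (V * transpose_mat V) \<in> carrier_mat n m" by (auto intro!: carrier_matI)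
  have c3: "U * transpose_mat U * W * (1\<^sub>m m - V * transpose_mat V) \<in> carrier_mat n m" by (auto intro!: carrier_matI)
  have c12: "U * transpose_mat U * W * (V * transpose_mat V) + (1\<^sub>m n - U * transpose_mat U) * W * (V * transpose_mat V) \<in> carrier_mat n m"
    using c1 c2 by simp
  show ?thesis
    unfolding tangent_proj_def tpm_def
    apply (subst distr_add_d, simp, simp, simp add: mult.commute)+
    apply (simp only: k1 k2 k3)
    by (simp only: vecm_add[OF c12 c3] vecm_add[OF c1 c2])
qed

lemma inner_X:
  assumes U: "U \<in> carrier_mat n r" and V: "V \<in> carrier_mat m r" and S: "S \<in> carrier_mat r r"
    and Y: "Y \<in> carrier_mat n m"
  shows "transpose_mat (vecm (U * S * transpose_mat V)) * vecm Y = transpose_mat (vecm S) * vecm (transpose_mat U * Y * V)"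
proof -
  have e1: "vecm (U * S * transpose_mat V) = kron V U * vecm S"
    using kron_vec[of U n r S r "transpose_mat V" m] U V S by simp
  have kc: "kron V U \<in> carrier_mat (m*n) (r*r)" using U V by (auto intro!: carrier_matI)
  have sc: "vecm S \<in> carrier_mat (r*r) 1" using S by (auto intro!: carrier_matI)
  have yc: "vecm Y \<in> carrier_mat (m*n) 1" using Y by (auto intro!: carrier_matI simp: mult.commute)
  have "transpose_mat (vecm (U * S * transpose_mat V)) * vecm Y = (transpose_mat (vecm S) * transpose_mat (kron V U)) * vecm Y"
    unfolding e1 by (subst transpose_mult[OF kc sc]) simp
  also have "\<dots> = transpose_mat (vecm S) * (transpose_mat (kron V U) * vecm Y)"
    by (rule assoc_mult_mat[of _ 1 "r*r" _ "m*n"]) (use kc sc yc in auto)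
  also have "transpose_mat (kron V U) * vecm Y = vecm (transpose_mat U * Y * V)"
    unfolding transpose_kron using kron_vec[of "transpose_mat U" r n Y m V r] U V Y by simp
  finally show ?thesis .
qed

context
  fixes U V :: "real mat" and n m r :: nat
  assumes U: "U \<in> carrier_mat n r" and V: "V \<in> carrier_mat m r"
    and UU: "transpose_mat U * U = 1\<^sub>m r" and VV: "transpose_mat V * V = 1\<^sub>m r"
begin
interpretation U: orthm U n r using U UU by unfold_locales
interpretation V: orthm V m r using V VV by unfold_locales

lemma tp_V: assumes W: "W \<in> carrier_mat n m" shows "tpm n m U V W * V = W * V"
proof -
  have [simp]: "dim_row W = n" "dim_col W = m" using W by auto
  show ?thesis
    unfolding tpm_def
    by (simp add: distr_add_d assoc_d distr_minus_d)
qed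

lemma tp_Ut: assumes W: "W \<in> carrier_mat n m" shows "transpose_mat U * tpm n m U V W = transpose_mat U * W"
proof -
  have [simp]: "dim_row W = n" "dim_col W = m" using W by auto
  show ?thesis
    unfolding tpm_def
    apply (simp add: distl_add_d assoc_d distr_minus_d distl_minus_d)
    done
qed

lemma tp_id: assumes Y: "Y \<in> carrier_mat n m"
  and h: "(1\<^sub>m n - U * transpose_mat U) * Y * (1\<^sub>m m - V * transpose_mat V) = 0\<^sub>m n m"
  shows "tpm n m U V Y = Y"
proof -
  have [simp]: "dim_row Y = n" "dim_col Y = m" using Y by auto
  from h have h': "Y - U * (transpose_mat U * Y) - (Y * (V * transpose_mat V) - U * (transpose_mat U * (Y * (V * transpose_mat V)))) = 0\<^sub>m n m"
    by (simp add: distl_add_d assoc_d distr_minus_d distl_minus_d)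
  show ?thesis
    unfolding tpm_def
    by (simp add: distl_add_d assoc_d distr_minus_d distl_minus_d) (rule lin4[OF _ _ _ _ _ _ _ _ h'], auto)
qed
end


context
  fixes U V :: "real mat" and n m r :: nat
  assumes U: "U \<in> carrier_mat n r" and V: "V \<in> carrier_mat m r"
    and UU: "transpose_mat U * U = 1\<^sub>m r" and VV: "transpose_mat V * V = 1\<^sub>m r"
begin
interpretation U: orthm U n r using U UU by unfold_locales
interpretation V: orthm V m r using V VV by unfold_locales

lemma alg:
  assumes W: "W \<in> carrier_mat n m" and S: "S \<in> carrier_mat r r"
  shows "tpm n m U V W = s \<cdot>\<^sub>m (U * S * transpose_mat V) \<longleftrightarrow>
     (W * V = U * (transpose_mat U * W * V) \<and> transpose_mat U * W = transpose_mat U * W * V * transpose_mat V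
      \<and> transpose_mat U * W * V = s \<cdot>\<^sub>m S)"
proof
  have [simp]: "dim_row W = n" "dim_col W = m" "dim_row S = r" "dim_col S = r" using W S by auto
  assume h: "tpm n m U V W = s \<cdot>\<^sub>m (U * S * transpose_mat V)"
  have h3: "transpose_mat U * W * V = s \<cdot>\<^sub>m S"
  proof -
    have "transpose_mat U * W * V = transpose_mat U * tpm n m U V W * V"
      using tp_Ut[OF U V UU VV W] by simp
    also have "\<dots> = s \<cdot>\<^sub>m S" unfolding h by (simp add: assoc_d smult_r_d smult_l_d)
    finally show ?thesis .
  qed
  have h1: "W * V = U * (transpose_mat U * W * V)"
  proof -
    have "W * V = tpm n m U V W * V"
      using tp_V[OF U V UU VV W] by simp
    also have "\<dots> = U * (s \<cdot>\<^sub>m S)" unfolding h by (simp add: assoc_d smult_r_d smult_l_d)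
    finally show ?thesis unfolding h3 .
  qed
  have h2: "transpose_mat U * W = transpose_mat U * W * V * transpose_mat V"
  proof -
    have "transpose_mat U * W = transpose_mat U * tpm n m U V W"
      using tp_Ut[OF U V UU VV W] by simp
    also have "\<dots> = (s \<cdot>\<^sub>m S) * transpose_mat V" unfolding h by (simp add: assoc_d smult_r_d smult_l_d)
    finally show ?thesis unfolding h3 .
  qed
  show "W * V = U * (transpose_mat U * W * V) \<and> transpose_mat U * W = transpose_mat U * W * V * transpose_mat V
      \<and> transpose_mat U * W * V = s \<cdot>\<^sub>m S" using h1 h2 h3 by simp
next
  have [simp]: "dim_row W = n" "dim_col W = m" "dim_row S = r" "dim_col S = r" using W S by auto
  assume "W * V = U * (transpose_mat U * W * V) \<and> transpose_mat U * W = transpose_mat U * W * V * transpose_mat V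
      \<and> transpose_mat U * W * V = s \<cdot>\<^sub>m S"
  then have h1: "W * V = U * (transpose_mat U * W * V)" and h2: "transpose_mat U * W = transpose_mat U * W * V * transpose_mat V"
    and h3: "transpose_mat U * W * V = s \<cdot>\<^sub>m S" by auto
  have hb: "W * (V * transpose_mat V) = s \<cdot>\<^sub>m (U * S * transpose_mat V)"
  proof -
    have "W * (V * transpose_mat V) = (W * V) * transpose_mat V" by (simp add: assoc_d)
    also have "\<dots> = U * (s \<cdot>\<^sub>m S) * transpose_mat V" by (subst h1) (simp add: h3)
    also have "\<dots> = s \<cdot>\<^sub>m (U * S * transpose_mat V)" by (simp add: assoc_d smult_r_d smult_l_d)
    finally show ?thesis .
  qed
  have hc: "U * (transpose_mat U * W) = s \<cdot>\<^sub>m (U * S * transpose_mat V)"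
  proof -
    have "U * (transpose_mat U * W) = U * ((s \<cdot>\<^sub>m S) * transpose_mat V)" by (subst h2) (simp add: h3)
    also have "\<dots> = s \<cdot>\<^sub>m (U * S * transpose_mat V)" by (simp add: assoc_d smult_r_d smult_l_d)
    finally show ?thesis .
  qed
  have hd: "U * (transpose_mat U * (W * (V * transpose_mat V))) = s \<cdot>\<^sub>m (U * S * transpose_mat V)"
  proof -
    have "U * (transpose_mat U * (W * (V * transpose_mat V))) = U * ((transpose_mat U * W * V) * transpose_mat V)"
      by (simp add: assoc_d)
    also have "\<dots> = s \<cdot>\<^sub>m (U * S * transpose_mat V)" unfolding h3 by (simp add: assoc_d smult_r_d smult_l_d)
    finally show ?thesis .
  qed
  show "tpm n m U V W = s \<cdot>\<^sub>m (U * S * transpose_mat V)"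
    unfolding tpm_def
    by (simp add: distl_add_d assoc_d distr_minus_d distl_minus_d hb hc hd smult_l_d smult_r_d)
qed
end


context
  fixes U V :: "real mat" and n m r :: nat
  assumes U: "U \<in> carrier_mat n r" and V: "V \<in> carrier_mat m r"
    and UU: "transpose_mat U * U = 1\<^sub>m r" and VV: "transpose_mat V * V = 1\<^sub>m r"
begin
interpretation U: orthm U n r using U UU by unfold_locales
interpretation V: orthm V m r using V VV by unfold_locales

lemma key:
  assumes W: "W \<in> carrier_mat n m" and S: "S \<in> carrier_mat r r"
    and B: "B = block3 (kron (1\<^sub>m r) U) (0\<^sub>m (n*r) (r*r)) (0\<^sub>m (n*r) 1)
                    (0\<^sub>m (m*r) (r*r)) (kron V (1\<^sub>m r)) (0\<^sub>m (m*r) 1)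
                    (0\<^sub>m (r*r) (r*r)) (0\<^sub>m (r*r) (r*r)) (vecm S)"
  shows "(1\<^sub>m (n*m) - vecm (U * S * transpose_mat V) * transpose_mat (vecm (U * S * transpose_mat V)))
            * (tangent_proj n m U V * vecm W) = 0\<^sub>m (n*m) 1
     \<longleftrightarrow> (1\<^sub>m (n*r+m*r+r*r) - B * transpose_mat B) *
           stack3 (transpose_mat (Ev n V) * vecm W) (transpose_mat (Eu m U) * vecm W) (transpose_mat (Evu U V) * vecm W)
         = 0\<^sub>m (n*r+m*r+r*r) 1"
proof -
  have [simp]: "dim_row W = n" "dim_col W = m" "dim_row S = r" "dim_col S = r" using W S by auto
  define X where "X = U * S * transpose_mat V"
  define x where "x = vecm X"
  define \<sigma> where "\<sigma> = transpose_mat (vecm S) * vecm (transpose_mat U * W * V)"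
  define s where "s = \<sigma> $$ (0,0)"
  define Z where "Z = tpm n m U V W"
  have Xc: "X \<in> carrier_mat n m" unfolding X_def by (auto intro!: carrier_matI)
  have xc: "x \<in> carrier_mat (n*m) 1" unfolding x_def using Xc by (auto intro!: carrier_matI)
  have \<sigma>c: "\<sigma> \<in> carrier_mat 1 1" unfolding \<sigma>_def by (auto intro!: carrier_matI)
  have Zc: "Z \<in> carrier_mat n m" unfolding Z_def using tpm_carrier[OF U V W] .
  have vZc: "vecm Z \<in> carrier_mat (n*m) 1" using Zc by (auto intro!: carrier_matI)
  have L1: "tangent_proj n m U V * vecm W = vecm Z" unfolding Z_def by (rule P_vec[OF U V W])
  have L2: "transpose_mat x * vecm Z = \<sigma>"
  proof -
    have "transpose_mat U * Z * V = transpose_mat U * W * V"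
      unfolding Z_def using tp_Ut[OF U V UU VV W] by simp
    then show ?thesis unfolding x_def X_def \<sigma>_def using inner_X[OF U V S Zc] by simp
  qed
  have L3: "(1\<^sub>m (n*m) - x * transpose_mat x) * vecm Z = vecm (Z - s \<cdot>\<^sub>m X)"
  proof -
    have "(1\<^sub>m (n*m) - x * transpose_mat x) * vecm Z = 1\<^sub>m (n*m) * vecm Z - (x * transpose_mat x) * vecm Z"
      by (rule minus_mult_distrib_mat[of _ "n*m" "n*m"]) (use xc vZc in auto)
    also have "\<dots> = vecm Z - x * \<sigma>"
      using xc vZc L2 by (simp add: assoc_mult_mat[of x "n*m" 1 _ "n*m" _ 1] left_mult_one_mat[OF vZc])
    also have "x * \<sigma> = s \<cdot>\<^sub>m x" unfolding s_def by (rule mult_one_by_one[OF xc \<sigma>c])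
    also have "s \<cdot>\<^sub>m x = vecm (s \<cdot>\<^sub>m X)" unfolding x_def by (simp add: vecm_smult)
    also have "vecm Z - vecm (s \<cdot>\<^sub>m X) = vecm (Z - s \<cdot>\<^sub>m X)"
      by (rule vecm_minus[symmetric, of _ n m]) (use Zc Xc in auto)
    finally show ?thesis .
  qed
  have LHS: "(1\<^sub>m (n*m) - x * transpose_mat x) * (tangent_proj n m U V * vecm W) = 0\<^sub>m (n*m) 1
     \<longleftrightarrow> (W * V = U * (transpose_mat U * W * V) \<and> transpose_mat U * W = transpose_mat U * W * V * transpose_mat V
      \<and> transpose_mat U * W * V = s \<cdot>\<^sub>m S)"
  proof -
    have "(1\<^sub>m (n*m) - x * transpose_mat x) * (tangent_proj n m U V * vecm W) = 0\<^sub>m (n*m) 1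
      \<longleftrightarrow> vecm (Z - s \<cdot>\<^sub>m X) = vecm (0\<^sub>m n m)" unfolding L1 L3 vecm_zero ..
    also have "\<dots> \<longleftrightarrow> Z - s \<cdot>\<^sub>m X = 0\<^sub>m n m" by (rule vecm_eq_iff) (use Zc Xc in auto)
    also have "\<dots> \<longleftrightarrow> Z = s \<cdot>\<^sub>m X" by (rule mat_minus_eq_0) (use Zc Xc in auto)
    also have "\<dots> \<longleftrightarrow> (W * V = U * (transpose_mat U * W * V) \<and> transpose_mat U * W = transpose_mat U * W * V * transpose_mat V
      \<and> transpose_mat U * W * V = s \<cdot>\<^sub>m S)"
      unfolding Z_def X_def by (rule alg[OF U V UU VV W S])
    finally show ?thesis .
  qed
  have e1: "transpose_mat (Ev n V) * vecm W = vecm (W * V)"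
    unfolding Ev_def transpose_kron transpose_one by (rule kron_vec_right[OF W V])
  have e2: "transpose_mat (Eu m U) * vecm W = vecm (transpose_mat U * W)"
    unfolding Eu_def transpose_kron transpose_one by (rule kron_vec_left) (use U W in auto)
  have e3: "transpose_mat (Evu U V) * vecm W = vecm (transpose_mat U * W * V)"
    unfolding Evu_def transpose_kron by (rule kron_vec) (use U V W in auto)
  define v where "v = stack3 (vecm (W * V)) (vecm (transpose_mat U * W)) (vecm (transpose_mat U * W * V))"
  have G1: "W * V \<in> carrier_mat n r" and G2: "transpose_mat U * W \<in> carrier_mat r m"
    and G3: "transpose_mat U * W * V \<in> carrier_mat r r" by (auto intro!: carrier_matI)
  have g1: "vecm (W * V) \<in> carrier_mat (n*r) 1" and g2: "vecm (transpose_mat U * W) \<in> carrier_mat (m*r) 1"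
    and g3: "vecm (transpose_mat U * W * V) \<in> carrier_mat (r*r) 1"
    by (auto intro!: carrier_matI simp: mult.commute)
  have vc: "v \<in> carrier_mat (n*r+m*r+r*r) 1" unfolding v_def using g1 g2 g3 by simp
  have bt: "transpose_mat B * v = stack3 (vecm (transpose_mat U * (W * V))) (vecm (transpose_mat U * W * V)) \<sigma>"
    unfolding v_def \<sigma>_def by (rule BT_mult[OF U V S G1 G2 G3 B])
  have H1: "transpose_mat U * (W * V) \<in> carrier_mat r r" by (auto intro!: carrier_matI)
  have bb: "B * (transpose_mat B * v) = stack3 (vecm (U * (transpose_mat U * (W * V))))
      (vecm (transpose_mat U * W * V * transpose_mat V)) (vecm S * \<sigma>)"
    unfolding bt by (rule B_mult[OF U V S H1 G3 \<sigma>c B])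
  have Bc: "B \<in> carrier_mat (n*r+m*r+r*r) (r*r+r*r+1)"
    unfolding B by (rule block3_carrier) (use U V S in \<open>auto intro!: carrier_matI simp: mult.commute\<close>)
  have Pbv: "(1\<^sub>m (n*r+m*r+r*r) - B * transpose_mat B) * v = v - B * (transpose_mat B * v)"
  proof -
    have "(1\<^sub>m (n*r+m*r+r*r) - B * transpose_mat B) * v = 1\<^sub>m (n*r+m*r+r*r) * v - (B * transpose_mat B) * v"
      by (rule minus_mult_distrib_mat[of _ "n*r+m*r+r*r" "n*r+m*r+r*r"]) (use Bc vc in auto)
    also have "\<dots> = v - B * (transpose_mat B * v)"
      using Bc vc by (simp add: left_mult_one_mat[OF vc] assoc_mult_mat[of B _ "r*r+r*r+1" _ "n*r+m*r+r*r" _ 1])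
    finally show ?thesis .
  qed
  have k1: "vecm (U * (transpose_mat U * (W * V))) \<in> carrier_mat (n*r) 1"
    and k2: "vecm (transpose_mat U * W * V * transpose_mat V) \<in> carrier_mat (m*r) 1"
    and k3: "vecm S * \<sigma> \<in> carrier_mat (r*r) 1"
    using \<sigma>c by (auto intro!: carrier_matI simp: mult.commute)
  have RHS: "(1\<^sub>m (n*r+m*r+r*r) - B * transpose_mat B) * v = 0\<^sub>m (n*r+m*r+r*r) 1
     \<longleftrightarrow> (W * V = U * (transpose_mat U * W * V) \<and> transpose_mat U * W = transpose_mat U * W * V * transpose_mat V
      \<and> transpose_mat U * W * V = s \<cdot>\<^sub>m S)"
  proof -
    have "(1\<^sub>m (n*r+m*r+r*r) - B * transpose_mat B) * v =
      stack3 (vecm (W * V) - vecm (U * (transpose_mat U * (W * V))))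
        (vecm (transpose_mat U * W) - vecm (transpose_mat U * W * V * transpose_mat V))
        (vecm (transpose_mat U * W * V) - vecm S * \<sigma>)"
      unfolding Pbv bb unfolding v_def by (rule stack3_minus[OF g1 g2 g3 k1 k2 k3])
    moreover have "0\<^sub>m (n*r+m*r+r*r) 1 = stack3 (0\<^sub>m (n*r) 1) (0\<^sub>m (m*r) 1) (0\<^sub>m (r*r) 1)"
      by (simp add: stack3_zero)
    ultimately have st: "(1\<^sub>m (n*r+m*r+r*r) - B * transpose_mat B) * v = 0\<^sub>m (n*r+m*r+r*r) 1 \<longleftrightarrow>
       vecm (W * V) - vecm (U * (transpose_mat U * (W * V))) = 0\<^sub>m (n*r) 1 \<and>
       vecm (transpose_mat U * W) - vecm (transpose_mat U * W * V * transpose_mat V) = 0\<^sub>m (m*r) 1 \<and>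
       vecm (transpose_mat U * W * V) - vecm S * \<sigma> = 0\<^sub>m (r*r) 1"
      by (simp only:) (rule stack3_eq_iff, use g1 g2 g3 k1 k2 k3 in \<open>auto simp: minus_carrier_mat\<close>)
    have q0: "vecm S * \<sigma> = vecm (s \<cdot>\<^sub>m S)"
      unfolding s_def vecm_smult by (rule mult_one_by_one[OF _ \<sigma>c]) (auto intro!: carrier_matI)
    have q1: "vecm (W * V) - vecm (U * (transpose_mat U * (W * V))) = 0\<^sub>m (n*r) 1 \<longleftrightarrow> W * V = U * (transpose_mat U * W * V)"
      by (subst mat_minus_eq_0[OF g1 k1], subst vecm_eq_iff[of _ n r]) (auto intro!: carrier_matI simp: assoc_d)
    have q2: "vecm (transpose_mat U * W) - vecm (transpose_mat U * W * V * transpose_mat V) = 0\<^sub>m (m*r) 1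
        \<longleftrightarrow> transpose_mat U * W = transpose_mat U * W * V * transpose_mat V"
      by (subst mat_minus_eq_0[OF g2 k2], subst vecm_eq_iff[of _ r m]) (auto intro!: carrier_matI)
    have k3': "vecm (s \<cdot>\<^sub>m S) \<in> carrier_mat (r*r) 1" by (auto intro!: carrier_matI)
    have q3: "vecm (transpose_mat U * W * V) - vecm (s \<cdot>\<^sub>m S) = 0\<^sub>m (r*r) 1 \<longleftrightarrow> transpose_mat U * W * V = s \<cdot>\<^sub>m S"
      by (subst mat_minus_eq_0[OF g3 k3'], subst vecm_eq_iff[of _ r r]) (auto intro!: carrier_matI)
    show ?thesis unfolding st q0 q1 q2 q3 ..
  qed
  show ?thesis using LHS RHS unfolding x_def X_def v_def e1 e2 e3 by simp
qed
end


lemma zero_transpose_iff: "M \<in> carrier_mat a b \<Longrightarrow> (M = 0\<^sub>m a b) = (transpose_mat (M::real mat) = 0\<^sub>m b a)"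
  by (metis transpose_transpose zero_transpose_mat)

theorem proposition2:
  fixes n m r :: nat and A U S V U\<^sub>\<xi> V\<^sub>\<xi> S\<^sub>\<xi> :: "real mat"
  assumes A: "A \<in> carrier_mat (n*m) (n*m)"
    and U: "U \<in> carrier_mat n r" and V: "V \<in> carrier_mat m r" and S: "S \<in> carrier_mat r r"
    and UU: "transpose_mat U * U = 1\<^sub>m r" and VV: "transpose_mat V * V = 1\<^sub>m r"
    and Sdiag: "diagonal_mat S" and Spos: "\<forall>i<r. S $$ (i,i) > 0"
    and norm1: "transpose_mat (vecm (U * S * transpose_mat V)) * vecm (U * S * transpose_mat V) = 1\<^sub>m 1"
    and Ux: "U\<^sub>\<xi> \<in> carrier_mat n r" and Vx: "V\<^sub>\<xi> \<in> carrier_mat m r" and Sx: "S\<^sub>\<xi> \<in> carrier_mat r r"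
  shows
    "let X = U * S * transpose_mat V;
         x = vecm X;
         N = n * m;
         Rx = (transpose_mat x * A * x) $$ (0,0);
         C = A - Rx \<cdot>\<^sub>m 1\<^sub>m N;
         P = tangent_proj n m U V;
         Q = 1\<^sub>m N - x * transpose_mat x;
         \<xi> = vecm (U\<^sub>\<xi> * transpose_mat V + U * transpose_mat V\<^sub>\<xi> + U * S\<^sub>\<xi> * transpose_mat V);
         \<tau> = stack3 (vecm U\<^sub>\<xi>) (vecm (transpose_mat V\<^sub>\<xi>)) (vecm S\<^sub>\<xi>);
         ev = Ev n V; eu = Eu m U; evu = Evu U V;
         B = block3 (kron (1\<^sub>m r) U) (0\<^sub>m (n*r) (r*r)) (0\<^sub>m (n*r) 1)
                    (0\<^sub>m (m*r) (r*r)) (kron V (1\<^sub>m r)) (0\<^sub>m (m*r) 1)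
                    (0\<^sub>m (r*r) (r*r)) (0\<^sub>m (r*r) (r*r)) (vecm S);
         Cloc = block3 (loc_block ev C ev) (loc_block ev C eu) (loc_block ev C evu)
                       (loc_block eu C ev) (loc_block eu C eu) (loc_block eu C evu)
                       (loc_block evu C ev) (loc_block evu C eu) (loc_block evu C evu);
         g = stack3 (loc_block ev A ev * vecm (U * S))
                    (loc_block eu A eu * vecm (S * transpose_mat V))
                    (loc_block evu A evu * vecm S);
         K = n*r + m*r + r*r;
         Pb = 1\<^sub>m K - B * transpose_mat B
     in (transpose_mat U * U\<^sub>\<xi> = 0\<^sub>m r r \<and> transpose_mat V * V\<^sub>\<xi> = 0\<^sub>m r r
         \<and> transpose_mat (vecm S\<^sub>\<xi>) * vecm S = 0\<^sub>m 1 1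
         \<and> Q * P * C * P * Q * \<xi> = - (P * Q * A * x))
      \<longleftrightarrow> (transpose_mat B * \<tau> = 0\<^sub>m (2*(r*r) + 1) 1
         \<and> Pb * Cloc * Pb * \<tau> = - (Pb * g))"
proof -
  interpret U: orthm U n r using U UU by unfold_locales
  interpret V: orthm V m r using V VV by unfold_locales
  have [simp]: "dim_row S = r" "dim_col S = r" "dim_row A = n*m" "dim_col A = n*m"
    "dim_row U\<^sub>\<xi> = n" "dim_col U\<^sub>\<xi> = r" "dim_row V\<^sub>\<xi> = m" "dim_col V\<^sub>\<xi> = r"
    "dim_row S\<^sub>\<xi> = r" "dim_col S\<^sub>\<xi> = r"
    using S A Ux Vx Sx by auto
  define X where "X = U * S * transpose_mat V"
  define x where "x = vecm X"
  define Rx where "Rx = (transpose_mat x * A * x) $$ (0,0)"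
  define C where "C = A - Rx \<cdot>\<^sub>m 1\<^sub>m (n*m)"
  define P where "P = tangent_proj n m U V"
  define Q where "Q = 1\<^sub>m (n*m) - x * transpose_mat x"
  define Y where "Y = U\<^sub>\<xi> * transpose_mat V + U * transpose_mat V\<^sub>\<xi> + U * S\<^sub>\<xi> * transpose_mat V"
  define \<xi> where "\<xi> = vecm Y"
  define a where "a = vecm U\<^sub>\<xi>"
  define b where "b = vecm (transpose_mat V\<^sub>\<xi>)"
  define c where "c = vecm S\<^sub>\<xi>"
  define \<tau> where "\<tau> = stack3 a b c"
  define ev where "ev = Ev n V"
  define eu where "eu = Eu m U"
  define evu where "evu = Evu U V"
  define B where "B = block3 (kron (1\<^sub>m r) U) (0\<^sub>m (n*r) (r*r)) (0\<^sub>m (n*r) 1)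
                    (0\<^sub>m (m*r) (r*r)) (kron V (1\<^sub>m r)) (0\<^sub>m (m*r) 1)
                    (0\<^sub>m (r*r) (r*r)) (0\<^sub>m (r*r) (r*r)) (vecm S)"
  define Cloc where "Cloc = block3 (loc_block ev C ev) (loc_block ev C eu) (loc_block ev C evu)
                       (loc_block eu C ev) (loc_block eu C eu) (loc_block eu C evu)
                       (loc_block evu C ev) (loc_block evu C eu) (loc_block evu C evu)"
  define g where "g = stack3 (loc_block ev A ev * vecm (U * S))
                    (loc_block eu A eu * vecm (S * transpose_mat V))
                    (loc_block evu A evu * vecm S)"
  define K where "K = n*r + m*r + r*r"
  define Pb where "Pb = 1\<^sub>m K - B * transpose_mat B"
  have main: "(transpose_mat U * U\<^sub>\<xi> = 0\<^sub>m r r \<and> transpose_mat V * V\<^sub>\<xi> = 0\<^sub>m r r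
         \<and> transpose_mat (vecm S\<^sub>\<xi>) * vecm S = 0\<^sub>m 1 1
         \<and> Q * P * C * P * Q * \<xi> = - (P * Q * A * x))
      \<longleftrightarrow> (transpose_mat B * \<tau> = 0\<^sub>m (2*(r*r) + 1) 1
         \<and> Pb * Cloc * Pb * \<tau> = - (Pb * g))"
  proof -
  have Xc: "X \<in> carrier_mat n m" unfolding X_def by (auto intro!: carrier_matI)
  have xc: "x \<in> carrier_mat (n*m) 1" unfolding x_def using Xc by (auto intro!: carrier_matI)
  have Yc: "Y \<in> carrier_mat n m" unfolding Y_def by (auto intro!: carrier_matI)
  have \<xi>c: "\<xi> \<in> carrier_mat (n*m) 1" unfolding \<xi>_def using Yc by (auto intro!: carrier_matI)
  have ac: "a \<in> carrier_mat (n*r) 1" and bc: "b \<in> carrier_mat (m*r) 1" and cc: "c \<in> carrier_mat (r*r) 1"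
    unfolding a_def b_def c_def by (auto intro!: carrier_matI simp: mult.commute)
  have \<tau>c: "\<tau> \<in> carrier_mat K 1" unfolding \<tau>_def K_def using ac bc cc by simp
  have evc: "ev \<in> carrier_mat (n*m) (n*r)" and euc: "eu \<in> carrier_mat (n*m) (m*r)"
    and evuc: "evu \<in> carrier_mat (n*m) (r*r)"
    unfolding ev_def eu_def evu_def Ev_def Eu_def Evu_def by (auto intro!: carrier_matI simp: mult.commute)
  have Cc: "C \<in> carrier_mat (n*m) (n*m)" unfolding C_def using A by (auto simp: minus_carrier_mat)
  have Pc: "P \<in> carrier_mat (n*m) (n*m)" unfolding P_def tangent_proj_def
    by (auto intro!: carrier_matI simp: mult.commute)
  have Qc: "Q \<in> carrier_mat (n*m) (n*m)" unfolding Q_def using xc by (auto simp: minus_carrier_mat)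
  have Bc: "B \<in> carrier_mat K (r*r+r*r+1)"
    unfolding B_def K_def by (rule block3_carrier) (use U V S in \<open>auto intro!: carrier_matI simp: mult.commute\<close>)
  have Pbc: "Pb \<in> carrier_mat K K" unfolding Pb_def using Bc by (auto simp: minus_carrier_mat)
  have bt: "transpose_mat B * \<tau> = stack3 (vecm (transpose_mat U * U\<^sub>\<xi>)) (vecm (transpose_mat V\<^sub>\<xi> * V))
       (transpose_mat (vecm S) * vecm S\<^sub>\<xi>)"
    unfolding \<tau>_def a_def b_def c_def by (rule BT_mult[OF U V S Ux _ Sx B_def]) (use Vx in auto)
  have cons_iff: "transpose_mat B * \<tau> = 0\<^sub>m (2*(r*r) + 1) 1 \<longleftrightarrow>
     (transpose_mat U * U\<^sub>\<xi> = 0\<^sub>m r r \<and> transpose_mat V * V\<^sub>\<xi> = 0\<^sub>m r r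
         \<and> transpose_mat (vecm S\<^sub>\<xi>) * vecm S = 0\<^sub>m 1 1)"
  proof -
    have z: "0\<^sub>m (2*(r*r) + 1) 1 = stack3 (0\<^sub>m (r*r) 1) (0\<^sub>m (r*r) 1) (0\<^sub>m 1 1)"
      using stack3_zero[of "r*r" 1 "r*r" 1] by (simp add: mult_2)
    have v1: "vecm (transpose_mat U * U\<^sub>\<xi>) \<in> carrier_mat (r*r) 1"
      and v2: "vecm (transpose_mat V\<^sub>\<xi> * V) \<in> carrier_mat (r*r) 1"
      and v3: "transpose_mat (vecm S) * vecm S\<^sub>\<xi> \<in> carrier_mat 1 1" by (auto intro!: carrier_matI)
    have st: "transpose_mat B * \<tau> = 0\<^sub>m (2*(r*r) + 1) 1 \<longleftrightarrow>
       vecm (transpose_mat U * U\<^sub>\<xi>) = 0\<^sub>m (r*r) 1 \<and> vecm (transpose_mat V\<^sub>\<xi> * V) = 0\<^sub>m (r*r) 1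
       \<and> transpose_mat (vecm S) * vecm S\<^sub>\<xi> = 0\<^sub>m 1 1"
      unfolding bt z by (rule stack3_eq_iff[OF v1 v2 v3]) auto
    have p1: "vecm (transpose_mat U * U\<^sub>\<xi>) = 0\<^sub>m (r*r) 1 \<longleftrightarrow> transpose_mat U * U\<^sub>\<xi> = 0\<^sub>m r r"
      unfolding vecm_zero[of r r, symmetric] by (rule vecm_eq_iff) (auto intro!: carrier_matI)
    have p2: "vecm (transpose_mat V\<^sub>\<xi> * V) = 0\<^sub>m (r*r) 1 \<longleftrightarrow> transpose_mat V * V\<^sub>\<xi> = 0\<^sub>m r r"
    proof -
      have "vecm (transpose_mat V\<^sub>\<xi> * V) = 0\<^sub>m (r*r) 1 \<longleftrightarrow> transpose_mat V\<^sub>\<xi> * V = 0\<^sub>m r r"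
        unfolding vecm_zero[of r r, symmetric] by (rule vecm_eq_iff) (auto intro!: carrier_matI)
      also have "\<dots> \<longleftrightarrow> transpose_mat (transpose_mat V\<^sub>\<xi> * V) = 0\<^sub>m r r"
        by (rule zero_transpose_iff) (auto intro!: carrier_matI)
      also have "transpose_mat (transpose_mat V\<^sub>\<xi> * V) = transpose_mat V * V\<^sub>\<xi>"
        using transpose_mult[of "transpose_mat V\<^sub>\<xi>" r m V r] Vx V by simp
      finally show ?thesis .
    qed
    have p3: "transpose_mat (vecm S) * vecm S\<^sub>\<xi> = 0\<^sub>m 1 1 \<longleftrightarrow> transpose_mat (vecm S\<^sub>\<xi>) * vecm S = 0\<^sub>m 1 1"
    proof -
      have "transpose_mat (vecm S) * vecm S\<^sub>\<xi> = 0\<^sub>m 1 1 \<longleftrightarrow> transpose_mat (transpose_mat (vecm S) * vecm S\<^sub>\<xi>) = 0\<^sub>m 1 1"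
        by (rule zero_transpose_iff[OF v3])
      also have "transpose_mat (transpose_mat (vecm S) * vecm S\<^sub>\<xi>) = transpose_mat (vecm S\<^sub>\<xi>) * vecm S"
        using transpose_mult[of "transpose_mat (vecm S)" 1 "r*r" "vecm S\<^sub>\<xi>" 1] by (simp add: carrier_matI)
      finally show ?thesis .
    qed
    show ?thesis unfolding st p1 p2 p3 ..
  qed
  have dimsx[simp]: "dim_row x = n*m" "dim_col x = 1" "dim_row \<xi> = n*m" "dim_col \<xi> = 1"
    "dim_row ev = n*m" "dim_col ev = n*r" "dim_row eu = n*m" "dim_col eu = m*r"
    "dim_row evu = n*m" "dim_col evu = r*r" "dim_row C = n*m" "dim_col C = n*m"
    "dim_row P = n*m" "dim_col P = n*m" "dim_row Q = n*m" "dim_col Q = n*m"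
    "dim_row a = n*r" "dim_col a = 1" "dim_row b = m*r" "dim_col b = 1" "dim_row c = r*r" "dim_col c = 1"
    "dim_row Pb = K" "dim_col Pb = K" "dim_row B = K" "dim_col B = r*r+r*r+1"
    using xc \<xi>c evc euc evuc Cc Pc Qc ac bc cc Pbc Bc by auto
  have xiE: "\<xi> = ev * a + eu * b + evu * c"
  proof -
    have 1: "ev * a = vecm (U\<^sub>\<xi> * transpose_mat V)"
      unfolding ev_def Ev_def a_def using kron_vec_right[OF Ux, of "transpose_mat V" m] V by simp
    have 2: "eu * b = vecm (U * transpose_mat V\<^sub>\<xi>)"
      unfolding eu_def Eu_def b_def by (rule kron_vec_left[OF U]) (use Vx in auto)
    have 3: "evu * c = vecm (U * S\<^sub>\<xi> * transpose_mat V)"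
      unfolding evu_def Evu_def c_def using kron_vec[OF U Sx, of "transpose_mat V" m] V by simp
    have y1: "U\<^sub>\<xi> * transpose_mat V \<in> carrier_mat n m" and y2: "U * transpose_mat V\<^sub>\<xi> \<in> carrier_mat n m"
      and y3: "U * S\<^sub>\<xi> * transpose_mat V \<in> carrier_mat n m" by (auto intro!: carrier_matI)
    have y12: "U\<^sub>\<xi> * transpose_mat V + U * transpose_mat V\<^sub>\<xi> \<in> carrier_mat n m" using y1 y2 by simp
    show ?thesis unfolding \<xi>_def Y_def 1 2 3 vecm_add[OF y12 y3] vecm_add[OF y1 y2] ..
  qed
  have Pxi: "P * \<xi> = \<xi>"
  proof -
    have h: "(1\<^sub>m n - U * transpose_mat U) * Y * (1\<^sub>m m - V * transpose_mat V) = 0\<^sub>m n m"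
      unfolding Y_def by (simp add: distl_add_d distr_add_d assoc_d)
    show ?thesis unfolding P_def \<xi>_def P_vec[OF U V Yc] tp_id[OF U V UU VV Yc h] ..
  qed
  have Px: "P * x = x"
  proof -
    have h: "(1\<^sub>m n - U * transpose_mat U) * X * (1\<^sub>m m - V * transpose_mat V) = 0\<^sub>m n m"
      unfolding X_def by (simp add: distl_add_d distr_add_d assoc_d)
    show ?thesis unfolding P_def x_def P_vec[OF U V Xc] tp_id[OF U V UU VV Xc h] ..
  qed
  have Psym: "transpose_mat P = P"
  proof -
    have k1: "kron (V * transpose_mat V) (U * transpose_mat U) \<in> carrier_mat (m*n) (m*n)"
      and k2: "kron (V * transpose_mat V) (1\<^sub>m n - U * transpose_mat U) \<in> carrier_mat (m*n) (m*n)"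
      and k3: "kron (1\<^sub>m m - V * transpose_mat V) (U * transpose_mat U) \<in> carrier_mat (m*n) (m*n)"
      by (auto intro!: carrier_matI)
    have k12: "kron (V * transpose_mat V) (U * transpose_mat U) + kron (V * transpose_mat V) (1\<^sub>m n - U * transpose_mat U) \<in> carrier_mat (m*n) (m*n)"
      using k1 k2 by simp
    show ?thesis unfolding P_def tangent_proj_def
      by (simp add: transpose_add[OF k12 k3] transpose_add[OF k1 k2] transpose_kron
          U.P_sym U.D_sym V.P_sym V.D_sym)
  qed
  have Qv: "Q * v = v - x * (transpose_mat x * v)" if vc: "v \<in> carrier_mat (n*m) 1" for v
  proof -
    have "Q * v = 1\<^sub>m (n*m) * v - (x * transpose_mat x) * v"
      unfolding Q_def by (rule minus_mult_distrib_mat[of _ "n*m" "n*m"]) (use xc vc in auto)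
    then show ?thesis using xc vc by (simp add: left_mult_one_mat[OF vc] assoc_mult_mat[of x "n*m" 1 _ "n*m" _ 1])
  qed
  have PQ: "P * (Q * v) = Q * (P * v)" if vc: "v \<in> carrier_mat (n*m) 1" for v
  proof -
    have xtv: "transpose_mat x * v \<in> carrier_mat 1 1" using xc vc by auto
    have "P * (Q * v) = P * v - P * (x * (transpose_mat x * v))"
      unfolding Qv[OF vc] by (rule mult_minus_distrib_mat[of _ "n*m" "n*m"]) (use Pc vc xc in auto)
    also have "P * (x * (transpose_mat x * v)) = x * (transpose_mat x * v)"
      using Px assoc_mult_mat[OF Pc xc xtv] by simp
    also have "transpose_mat x * v = transpose_mat x * (P * v)"
    proof -
      have "transpose_mat x * (P * v) = (transpose_mat x * P) * v"
        using assoc_mult_mat[of "transpose_mat x" 1 "n*m" P "n*m" v 1] xc Pc vc by simp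
      also have "transpose_mat x * P = transpose_mat (transpose_mat P * x)"
        using transpose_mult[of "transpose_mat P" "n*m" "n*m" x 1] Pc xc by simp
      also have "\<dots> = transpose_mat x" unfolding Psym Px ..
      finally show ?thesis by simp
    qed
    finally show ?thesis using Qv[of "P * v"] Pc vc by simp
  qed
  have eqv: "(Q * P * C * P * Q * \<xi> = - (P * Q * A * x)) \<longleftrightarrow> (Pb * Cloc * Pb * \<tau> = - (Pb * g))"
    if h1: "transpose_mat U * U\<^sub>\<xi> = 0\<^sub>m r r" and h2: "transpose_mat V * V\<^sub>\<xi> = 0\<^sub>m r r"
      and h3: "transpose_mat (vecm S\<^sub>\<xi>) * vecm S = 0\<^sub>m 1 1"
  proof -
    have btz: "transpose_mat B * \<tau> = 0\<^sub>m (r*r+r*r+1) 1" using cons_iff h1 h2 h3 by (simp add: mult_2)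
    have Pbt: "Pb * \<tau> = \<tau>"
    proof -
      have "Pb * \<tau> = 1\<^sub>m K * \<tau> - (B * transpose_mat B) * \<tau>"
        unfolding Pb_def by (rule minus_mult_distrib_mat[of _ K K]) (use Bc \<tau>c in auto)
      also have "\<dots> = \<tau> - B * (transpose_mat B * \<tau>)"
        using Bc \<tau>c by (simp add: left_mult_one_mat[OF \<tau>c] assoc_mult_mat[of B _ "r*r+r*r+1" _ K _ 1])
      also have "\<dots> = \<tau>" unfolding btz using Bc \<tau>c by simp
      finally show ?thesis .
    qed
    have h2': "transpose_mat V\<^sub>\<xi> * V = 0\<^sub>m r r"
    proof -
      have "transpose_mat V\<^sub>\<xi> * V = transpose_mat (transpose_mat V * V\<^sub>\<xi>)"
        using transpose_mult[of "transpose_mat V" r m V\<^sub>\<xi> r] V Vx by simp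
      then show ?thesis unfolding h2 by simp
    qed
    have Qxi: "Q * \<xi> = \<xi>"
    proof -
      have "transpose_mat U * Y * V = S\<^sub>\<xi>"
        unfolding Y_def by (simp add: distl_add_d distr_add_d assoc_d h1 h2')
      then have "transpose_mat x * \<xi> = transpose_mat (vecm S) * vecm S\<^sub>\<xi>"
        unfolding x_def X_def \<xi>_def using inner_X[OF U V S Yc] by simp
      also have "\<dots> = 0\<^sub>m 1 1"
      proof -
        have "transpose_mat (vecm S) * vecm S\<^sub>\<xi> = transpose_mat (transpose_mat (vecm S\<^sub>\<xi>) * vecm S)"
          using transpose_mult[of "transpose_mat (vecm S\<^sub>\<xi>)" 1 "r*r" "vecm S" 1] by (simp add: carrier_matI)
        then show ?thesis unfolding h3 by simp
      qed
      finally show ?thesis unfolding Qv[OF \<xi>c] using xc \<xi>c by simp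
    qed
    define w where "w = C * \<xi> + A * x"
    have Cxc: "C * \<xi> \<in> carrier_mat (n*m) 1" and Axc: "A * x \<in> carrier_mat (n*m) 1" using Cc \<xi>c A xc by auto
    have wc: "w \<in> carrier_mat (n*m) 1" unfolding w_def using Cxc Axc by simp
    obtain W where Wc: "W \<in> carrier_mat n m" and Ww: "vecm W = w" using vecm_surj[OF wc] by blast
    have LA: "Q * P * C * P * Q * \<xi> = Q * (P * (C * \<xi>))"
      by (simp add: assoc_d Qxi Pxi)
    have RA: "P * Q * A * x = Q * (P * (A * x))"
      using PQ[OF Axc] by (simp add: assoc_d)
    have QPc: "Q * (P * (C * \<xi>)) \<in> carrier_mat (n*m) 1" "Q * (P * (A * x)) \<in> carrier_mat (n*m) 1"
      using Qc Pc Cxc Axc by auto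
    have aeq: "(Q * P * C * P * Q * \<xi> = - (P * Q * A * x)) \<longleftrightarrow> Q * (P * vecm W) = 0\<^sub>m (n*m) 1"
    proof -
      have "Q * (P * vecm W) = Q * (P * (C * \<xi>)) + Q * (P * (A * x))"
        unfolding Ww w_def using Qc Pc Cxc Axc
        by (simp add: mult_add_distrib_mat[of P "n*m" "n*m" "C * \<xi>" 1] mult_add_distrib_mat[of Q "n*m" "n*m" _ 1])
      then show ?thesis unfolding LA RA by (simp add: mat_eq_uminus_iff[OF QPc])
    qed
    have lb: "loc_block e1 M e2 * v = transpose_mat e1 * (M * (e2 * v))"
      if "e1 \<in> carrier_mat (n*m) k1" "M \<in> carrier_mat (n*m) (n*m)" "e2 \<in> carrier_mat (n*m) k2" "v \<in> carrier_mat k2 1"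
      for e1 M e2 v k1 k2
      unfolding loc_block_def using that by (simp add: assoc_d)
    have Ct: "Cloc * \<tau> = stack3 (transpose_mat ev * (C * \<xi>)) (transpose_mat eu * (C * \<xi>)) (transpose_mat evu * (C * \<xi>))"
    proof -
      have lbc: "loc_block e1 C e2 \<in> carrier_mat k1 k2"
        if "e1 \<in> carrier_mat (n*m) k1" "e2 \<in> carrier_mat (n*m) k2" for e1 e2 k1 k2
        unfolding loc_block_def using that Cc by auto
      have "Cloc * \<tau> = stack3
         (loc_block ev C ev * a + loc_block ev C eu * b + loc_block ev C evu * c)
         (loc_block eu C ev * a + loc_block eu C eu * b + loc_block eu C evu * c)
         (loc_block evu C ev * a + loc_block evu C eu * b + loc_block evu C evu * c)"
        unfolding Cloc_def \<tau>_def
        by (rule block3_mult_stack3[OF lbc lbc lbc lbc lbc lbc lbc lbc lbc ac bc cc]) (use evc euc evuc in auto)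
      also have "\<dots> = stack3 (transpose_mat ev * (C * \<xi>)) (transpose_mat eu * (C * \<xi>)) (transpose_mat evu * (C * \<xi>))"
        unfolding lb[OF evc Cc evc ac] lb[OF evc Cc euc bc] lb[OF evc Cc evuc cc]
          lb[OF euc Cc evc ac] lb[OF euc Cc euc bc] lb[OF euc Cc evuc cc]
          lb[OF evuc Cc evc ac] lb[OF evuc Cc euc bc] lb[OF evuc Cc evuc cc] xiE
        by (simp add: distl_add_d)
      finally show ?thesis .
    qed
    have gx: "g = stack3 (transpose_mat ev * (A * x)) (transpose_mat eu * (A * x)) (transpose_mat evu * (A * x))"
    proof -
      have 1: "ev * vecm (U * S) = x"
        unfolding ev_def Ev_def x_def X_def using kron_vec_right[of "U * S" n r "transpose_mat V" m] U S V by simp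
      have 2: "eu * vecm (S * transpose_mat V) = x"
        unfolding eu_def Eu_def x_def X_def using kron_vec_left[OF U, of "S * transpose_mat V" m] U S V
        by (simp add: assoc_d)
      have 3: "evu * vecm S = x"
        unfolding evu_def Evu_def x_def X_def using kron_vec[OF U S, of "transpose_mat V" m] V by simp
      have c1: "vecm (U * S) \<in> carrier_mat (n*r) 1" and c2: "vecm (S * transpose_mat V) \<in> carrier_mat (m*r) 1"
        and c3: "vecm S \<in> carrier_mat (r*r) 1" by (auto intro!: carrier_matI simp: mult.commute)
      show ?thesis unfolding g_def lb[OF evc A evc c1] lb[OF euc A euc c2] lb[OF evuc A evuc c3] 1 2 3 ..
    qed
    have tc: "transpose_mat ev * u \<in> carrier_mat (n*r) 1" "transpose_mat eu * u \<in> carrier_mat (m*r) 1"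
      "transpose_mat evu * u \<in> carrier_mat (r*r) 1" if "u \<in> carrier_mat (n*m) 1" for u
      using that evc euc evuc by auto
    have sum: "Cloc * \<tau> + g = stack3 (transpose_mat ev * vecm W) (transpose_mat eu * vecm W) (transpose_mat evu * vecm W)"
      unfolding Ct gx stack3_add[OF tc[OF Cxc] tc[OF Axc]] Ww w_def
      using evc euc evuc Cxc Axc
      by (simp add: mult_add_distrib_mat[of "transpose_mat ev" "n*r" "n*m" _ 1]
          mult_add_distrib_mat[of "transpose_mat eu" "m*r" "n*m" _ 1]
          mult_add_distrib_mat[of "transpose_mat evu" "r*r" "n*m" _ 1])
    have Ctc: "Cloc * \<tau> \<in> carrier_mat K 1" unfolding Ct K_def using tc[OF Cxc] by simp
    have gc: "g \<in> carrier_mat K 1" unfolding gx K_def using tc[OF Axc] by simp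
    have beq: "(Pb * Cloc * Pb * \<tau> = - (Pb * g)) \<longleftrightarrow>
       Pb * stack3 (transpose_mat ev * vecm W) (transpose_mat eu * vecm W) (transpose_mat evu * vecm W) = 0\<^sub>m K 1"
    proof -
      have Clc: "Cloc \<in> carrier_mat K K" unfolding Cloc_def K_def
        by (rule block3_carrier) (use evc euc evuc Cc in \<open>auto simp: loc_block_def\<close>)
      have [simp]: "dim_row Cloc = K" "dim_col Cloc = K" "dim_row \<tau> = K" "dim_col \<tau> = 1" using Clc \<tau>c by auto
      have "Pb * Cloc * Pb * \<tau> = Pb * (Cloc * \<tau>)"
        by (simp add: assoc_d Pbt)
      moreover have "Pb * (Cloc * \<tau> + g) = Pb * (Cloc * \<tau>) + Pb * g"
        by (rule mult_add_distrib_mat[OF Pbc Ctc gc])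
      moreover have "Pb * (Cloc * \<tau>) \<in> carrier_mat K 1" "Pb * g \<in> carrier_mat K 1" using Pbc Ctc gc by auto
      ultimately show ?thesis unfolding sum[symmetric] by (simp add: mat_eq_uminus_iff)
    qed
    have kk: "Q * (P * vecm W) = 0\<^sub>m (n*m) 1 \<longleftrightarrow>
       Pb * stack3 (transpose_mat ev * vecm W) (transpose_mat eu * vecm W) (transpose_mat evu * vecm W) = 0\<^sub>m K 1"
      using key[OF U V UU VV Wc S B_def] unfolding Q_def x_def X_def P_def Pb_def K_def ev_def eu_def evu_def .
    show ?thesis unfolding aeq beq kk ..
  qed
  show ?thesis using cons_iff eqv by blast
  qed
  show ?thesis unfolding Let_def using main
    unfolding X_def x_def Rx_def C_def P_def Q_def Y_def \<xi>_def a_def b_def c_def \<tau>_def ev_def eu_def evu_def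
      B_def Cloc_def g_def K_def Pb_def .
qed


end
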